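(* Let $\mathcal G=((V,E),(V_1,V_2,V_\Diamond),\delta,w)$ be a stochastic game and let $\mathsf r$ be a real vector indexed by $V$ that satisfies the Bellman condition, with classes $C_1,\dots,C_k$. Let $i\in\{1,2\}$ and suppose Player $i$ follows a strategy such that, each time the token is on a vertex $v\in V_i$, the chosen successor lies in the same class as $v$. Then, for every initial vertex and every strategy of the other player, with probability $1$ the token eventually reaches a class $C_j$ (for some $1\le j\le k$) which it never leaves afterwards.
   Context: A stochastic game is $\mathcal{G}=((V,E),(V_1,V_2,V_\Diamond),\delta,w)$: a finite directed graph $(V,E)$ in which every vertex $v$ has a nonempty out-neighbour set $E(v)$, a partition of $V$ into Player 1, Player 2 and probabilistic vertices, a function $\delta$ giving each $v\in V_\Diamond$ a probability distribution $\delta(v)$ on $E(v)$, positive on every out-neighbour, and payoffs $w:E\to\mathbb{Q}$. The game proceeds by moving a token: from $v\in V_i$ Player $i$ chooses a successor, from $v\in V_\Diamond$ the successor $v'$ is chosen with probability $\delta(v)(v')$. Strategies are (deterministic) functions from finite histories ending in $V_i$ to successors; a strategy pair and initial vertex induce a probability measure on plays. For a real vector $\mathsf r=(r_v)_{v\in V}$, its classes $C_1,\dots,C_k$ are the maximal nonempty sets of vertices on which $\mathsf r$ is constant. $\mathsf r$ satisfies the Bellman condition if for every $v$: $r_v=\max_{v'\in E(v)}r_{v'}$ if $v\in V_1$, $r_v=\min_{v'\in E(v)}r_{v'}$ if $v\in V_2$, $r_v=\sum_{v'\in E(v)}\delta(v)(v')r_{v'}$ if $v\in V_\Diamond$. 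*)

theory Defs
  imports "HOL-Probability.Probability"
begin

text \<open>The payoff function w is irrelevant for the statement and omitted.\<close>
definition stochastic_game ::
  "'v set \<Rightarrow> ('v \<times> 'v) set \<Rightarrow> 'v set \<Rightarrow> 'v set \<Rightarrow> 'v set \<Rightarrow> ('v \<Rightarrow> 'v pmf) \<Rightarrow> bool" where
  "stochastic_game V E V1 V2 VP \<delta> \<longleftrightarrow>
     finite V \<and> E \<subseteq> V \<times> V \<and> (\<forall>v\<in>V. E `` {v} \<noteq> {}) \<and>
     V1 \<union> V2 \<union> VP = V \<and> V1 \<inter> V2 = {} \<and> V1 \<inter> VP = {} \<and> V2 \<inter> VP = {} \<and>
     (\<forall>v\<in>VP. set_pmf (\<delta> v) = E `` {v})"

definition is_history :: "'v set \<Rightarrow> ('v \<times> 'v) set \<Rightarrow> 'v list \<Rightarrow> bool" where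
  "is_history V E h \<longleftrightarrow> h \<noteq> [] \<and> set h \<subseteq> V \<and>
     (\<forall>k. Suc k < length h \<longrightarrow> (h ! k, h ! Suc k) \<in> E)"

definition strategy :: "'v set \<Rightarrow> ('v \<times> 'v) set \<Rightarrow> 'v set \<Rightarrow> ('v list \<Rightarrow> 'v) \<Rightarrow> bool" where
  "strategy V E Vi \<sigma> \<longleftrightarrow> (\<forall>h. is_history V E h \<and> last h \<in> Vi \<longrightarrow> (last h, \<sigma> h) \<in> E)"

definition bellman ::
  "'v set \<Rightarrow> ('v \<times> 'v) set \<Rightarrow> 'v set \<Rightarrow> 'v set \<Rightarrow> 'v set \<Rightarrow> ('v \<Rightarrow> 'v pmf) \<Rightarrow> ('v \<Rightarrow> real) \<Rightarrow> bool" where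
  "bellman V E V1 V2 VP \<delta> r \<longleftrightarrow>
     (\<forall>v\<in>V1. r v = Max (r ` (E `` {v}))) \<and>
     (\<forall>v\<in>V2. r v = Min (r ` (E `` {v}))) \<and>
     (\<forall>v\<in>VP. r v = (\<Sum>u\<in>E `` {v}. pmf (\<delta> v) u * r u))"

text \<open>The classes of r: maximal nonempty subsets of V on which r is constant (the level sets).\<close>
definition classes :: "'v set \<Rightarrow> ('v \<Rightarrow> real) \<Rightarrow> 'v set set" where
  "classes V r = {{u \<in> V. r u = r v} | v. v \<in> V}"

text \<open>The randomness is an i.i.d. stream
  of choice functions f, where f v is distributed according to \<delta> v independently for each
  probabilistic vertex v; at step n, a probabilistic vertex v moves to (\<omega> !! n) v. This yields
  exactly the law of the play determined by the two strategies and \<delta>.\<close>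
definition next_vertex ::
  "'v set \<Rightarrow> 'v set \<Rightarrow> ('v list \<Rightarrow> 'v) \<Rightarrow> ('v list \<Rightarrow> 'v) \<Rightarrow> 'v list \<Rightarrow> ('v \<Rightarrow> 'v) \<Rightarrow> 'v" where
  "next_vertex V1 V2 \<sigma>1 \<sigma>2 h f =
     (if last h \<in> V1 then \<sigma>1 h else if last h \<in> V2 then \<sigma>2 h else f (last h))"

fun history ::
  "'v set \<Rightarrow> 'v set \<Rightarrow> ('v list \<Rightarrow> 'v) \<Rightarrow> ('v list \<Rightarrow> 'v) \<Rightarrow> 'v \<Rightarrow> ('v \<Rightarrow> 'v) stream \<Rightarrow> nat \<Rightarrow> 'v list"
where
  "history V1 V2 \<sigma>1 \<sigma>2 s \<omega> 0 = [s]"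
| "history V1 V2 \<sigma>1 \<sigma>2 s \<omega> (Suc n) =
     (let h = history V1 V2 \<sigma>1 \<sigma>2 s \<omega> n in h @ [next_vertex V1 V2 \<sigma>1 \<sigma>2 h (\<omega> !! n)])"

definition play ::
  "'v set \<Rightarrow> 'v set \<Rightarrow> ('v list \<Rightarrow> 'v) \<Rightarrow> ('v list \<Rightarrow> 'v) \<Rightarrow> 'v \<Rightarrow> ('v \<Rightarrow> 'v) stream \<Rightarrow> 'v stream" where
  "play V1 V2 \<sigma>1 \<sigma>2 s \<omega> = smap (\<lambda>n. last (history V1 V2 \<sigma>1 \<sigma>2 s \<omega> n)) nats"

definition play_measure ::
  "'v set \<Rightarrow> 'v set \<Rightarrow> 'v set \<Rightarrow> ('v \<Rightarrow> 'v pmf) \<Rightarrow> ('v list \<Rightarrow> 'v) \<Rightarrow> ('v list \<Rightarrow> 'v) \<Rightarrow> 'v \<Rightarrow> 'v stream measure"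
where
  "play_measure V1 V2 VP \<delta> \<sigma>1 \<sigma>2 s =
     distr (stream_space (measure_pmf (Pi_pmf VP s \<delta>))) (stream_space (count_space UNIV))
       (play V1 V2 \<sigma>1 \<sigma>2 s)"

end

theory Submission
  imports Defs
begin


lemma AE_distr_nonmeas:
  assumes "AE x in M. P (f x)" and "{y \<in> space N. \<not> P y} \<in> sets N"
  shows "AE y in distr M N f. P y"
proof -
  obtain Z where Z: "Z \<in> null_sets M" "{x\<in>space M. \<not> P (f x)} \<subseteq> Z"
    using assms(1) by (auto simp: eventually_ae_filter)
  let ?B = "{y \<in> space N. \<not> P y}"
  have "emeasure M (f -` ?B \<inter> space M) \<le> emeasure M Z"
    using Z by (intro emeasure_mono) auto
  then have 0: "emeasure M (f -` ?B \<inter> space M) = 0" using Z by auto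
  have "emeasure (distr M N f) ?B = 0"
    unfolding distr_def emeasure_measure_of_conv using 0 by simp
  then have "?B \<in> null_sets (distr M N f)" using assms(2) by auto
  then show ?thesis by (rule AE_I') auto
qed

locale gm =
  fixes V E V1 V2 VP \<delta> and \<sigma>1 \<sigma>2 :: "'v list \<Rightarrow> 'v" and s :: 'v
  assumes game: "stochastic_game V E V1 V2 VP \<delta>" and sV: "s \<in> V"
begin

definition "P = Pi_pmf VP s \<delta>"
abbreviation "M \<equiv> measure_pmf P"
abbreviation "S \<equiv> stream_space M"

lemma finV: "finite V" and EV: "E \<subseteq> V \<times> V" and part: "V1 \<union> V2 \<union> VP = V"
  and disj: "V1 \<inter> V2 = {}" "V1 \<inter> VP = {}" "V2 \<inter> VP = {}"
  and supp: "\<And>v. v \<in> VP \<Longrightarrow> set_pmf (\<delta> v) = E `` {v}"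
  and ne: "\<And>v. v \<in> V \<Longrightarrow> E `` {v} \<noteq> {}"
  using game unfolding stochastic_game_def by auto

lemma finVP: "finite VP" using finV part by (metis finite_Un)

definition nc :: "'v list \<Rightarrow> ('v \<Rightarrow> 'v) \<Rightarrow> 'v" where
  "nc l f = (if last l \<in> V1 then \<sigma>1 l else if last l \<in> V2 then \<sigma>2 l
             else if f (last l) \<in> V then f (last l) else s)"

fun hc :: "'v list \<Rightarrow> ('v \<Rightarrow> 'v) stream \<Rightarrow> nat \<Rightarrow> 'v list" where
  "hc h \<omega> 0 = h"
| "hc h \<omega> (Suc n) = (let l = hc h \<omega> n in l @ [nc l (\<omega> !! n)])"

fun R :: "'v list \<Rightarrow> nat \<Rightarrow> 'v list set" where
  "R h 0 = {h}"
| "R h (Suc n) = (\<lambda>(l,u). l @ [u]) ` (R h n \<times> (V \<union> \<sigma>1 ` R h n \<union> \<sigma>2 ` R h n \<union> {s}))"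

lemma finite_R: "finite (R h n)"
  by (induction n) (auto simp: finV)

lemma nc_in: "l \<in> R h n \<Longrightarrow> nc l f \<in> V \<union> \<sigma>1 ` R h n \<union> \<sigma>2 ` R h n \<union> {s}"
  by (auto simp: nc_def)

lemma app_in_R: "l \<in> R h n \<Longrightarrow> l @ [nc l f] \<in> R h (Suc n)"
  unfolding R.simps by (rule image_eqI[where x="(l, nc l f)"]) (use nc_in in auto)

lemma hc_in_R: "hc h \<omega> n \<in> R h n"
  by (induction n) (auto simp: Let_def app_in_R simp del: R.simps(2))

lemma meas_M: "f \<in> measurable M (count_space A) \<longleftrightarrow> range f \<subseteq> A"
  by (auto simp: measurable_def)

lemma meas_hc_R: "(\<lambda>\<omega>. hc h \<omega> n) \<in> measurable S (count_space (R h n))"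
proof (induction n)
  case 0 then show ?case by simp
next
  case (Suc n)
  have "(\<lambda>\<omega>. (\<lambda>l \<omega>. l @ [nc l (\<omega> !! n)]) (hc h \<omega> n) \<omega>) \<in> measurable S (count_space (R h (Suc n)))"
  proof (rule measurable_compose_countable'[OF _ Suc])
    fix l assume l: "l \<in> R h n"
    have "(\<lambda>f. l @ [nc l f]) \<in> measurable M (count_space (R h (Suc n)))"
      unfolding meas_M using app_in_R[OF l] by auto
    then show "(\<lambda>\<omega>. l @ [nc l (\<omega> !! n)]) \<in> measurable S (count_space (R h (Suc n)))"
      by (rule measurable_compose[OF measurable_snth])
  qed (simp add: countable_finite finite_R)
  then show ?case by (simp add: Let_def)
qed

lemma meas_hc[measurable]: "(\<lambda>\<omega>. hc h \<omega> n) \<in> measurable S (count_space UNIV)"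
  by (rule measurable_compose[OF meas_hc_R]) simp

lemma pred_hc[measurable]: "Measurable.pred S (\<lambda>\<omega>. \<Phi> (hc h \<omega> n))"
  by (rule measurable_compose[OF meas_hc]) simp

lemma hc_shift: "hc h (f ## \<omega>) (Suc n) = hc (h @ [nc h f]) \<omega> n"
  by (induction n) (simp_all add: Let_def)

end
context gm begin


lemma rec_S:
  assumes [measurable]: "Measurable.pred S \<Phi>"
  shows "emeasure S {\<omega>\<in>space S. \<Phi> \<omega>} = (\<integral>\<^sup>+f. emeasure S {\<omega>\<in>space S. \<Phi> (f ## \<omega>)} \<partial>M)"
proof -
  have "{\<omega>\<in>space S. \<Phi> \<omega>} \<in> sets S" by measurable
  then show ?thesis
  using prob_space.emeasure_stream_space[OF prob_space_measure_pmf[of P], where X="{\<omega>\<in>space S. \<Phi> \<omega>}"] by (simp add: space_stream_space)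
qed

lemma probS: "prob_space S"
  by (rule prob_space.prob_space_stream_space[OF prob_space_measure_pmf])

definition D :: "('v \<Rightarrow> real) \<Rightarrow> real \<Rightarrow> 'v set" where
  "D \<rho> x = {v\<in>VP. \<exists>u\<in>E``{v}. \<rho> u > x}"

definition QN :: "('v \<Rightarrow> real) \<Rightarrow> real \<Rightarrow> nat \<Rightarrow> 'v list \<Rightarrow> ('v \<Rightarrow> 'v) stream \<Rightarrow> bool" where
  "QN \<rho> x N h \<omega> \<longleftrightarrow> (\<forall>n\<ge>N. \<rho> (last (hc h \<omega> n)) \<le> x) \<and> (\<forall>m. \<exists>n\<ge>m. last (hc h \<omega> n) \<in> D \<rho> x)"

definition GT :: "('v \<Rightarrow> real) \<Rightarrow> real \<Rightarrow> nat \<Rightarrow> 'v list \<Rightarrow> ('v \<Rightarrow> 'v) stream \<Rightarrow> bool" where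
  "GT \<rho> x T h \<omega> \<longleftrightarrow> QN \<rho> x 0 h \<omega> \<and> (\<exists>n\<le>T. last (hc h \<omega> n) \<in> D \<rho> x)"

lemma meas_QN[measurable]: "Measurable.pred S (QN \<rho> x N h)"
proof -
  have 1: "Measurable.pred S (\<lambda>\<omega>. \<rho> (last (hc h \<omega> n)) \<le> x)" for n by (rule pred_hc)
  have 2: "Measurable.pred S (\<lambda>\<omega>. last (hc h \<omega> n) \<in> D \<rho> x)" for n by (rule pred_hc)
  have 3: "Measurable.pred S (\<lambda>\<omega>. \<forall>n. N \<le> n \<longrightarrow> \<rho> (last (hc h \<omega> n)) \<le> x)"
    by (intro pred_intros_countable pred_intros_imp' 1)
  have 4: "Measurable.pred S (\<lambda>\<omega>. \<forall>m. \<exists>n. m \<le> n \<and> last (hc h \<omega> n) \<in> D \<rho> x)"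
    by (intro pred_intros_countable pred_intros_conj1' 2)
  show ?thesis unfolding QN_def
    by (intro pred_intros_logic 3 4)
qed
lemma meas_GT[measurable]: "Measurable.pred S (GT \<rho> x T h)"
proof -
  have 2: "Measurable.pred S (\<lambda>\<omega>. last (hc h \<omega> n) \<in> D \<rho> x)" for n by (rule pred_hc)
  have 4: "Measurable.pred S (\<lambda>\<omega>. \<exists>n. n \<le> T \<and> last (hc h \<omega> n) \<in> D \<rho> x)"
    by (intro pred_intros_countable pred_intros_conj1' 2)
  show ?thesis unfolding GT_def
    by (intro pred_intros_logic 4 meas_QN)
qed
lemma allSuc: "(\<forall>n. P n) \<longleftrightarrow> P 0 \<and> (\<forall>n. P (Suc n))" for P :: "nat \<Rightarrow> bool"
  by (metis not0_implies_Suc)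

lemma allSuc2: "(\<forall>n\<ge>Suc N. P n) \<longleftrightarrow> (\<forall>n\<ge>N. P (Suc n))" for P :: "nat \<Rightarrow> bool"
proof
  assume "\<forall>n\<ge>Suc N. P n" then show "\<forall>n\<ge>N. P (Suc n)" by simp
next
  assume a: "\<forall>n\<ge>N. P (Suc n)"
  show "\<forall>n\<ge>Suc N. P n"
  proof (intro allI impI)
    fix n assume "Suc N \<le> n"
    then obtain k where "n = Suc k" "N \<le> k" by (cases n) auto
    then show "P n" using a by simp
  qed
qed

lemma infSuc: "(\<forall>m. \<exists>n\<ge>m. P (Suc n)) \<longleftrightarrow> (\<forall>m. \<exists>n\<ge>m. P n)" for P :: "nat \<Rightarrow> bool"
proof
  assume a: "\<forall>m. \<exists>n\<ge>m. P (Suc n)"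
  show "\<forall>m. \<exists>n\<ge>m. P n"
  proof
    fix m obtain n where "n \<ge> m" "P (Suc n)" using a by blast
    then show "\<exists>n\<ge>m. P n" by (intro exI[of _ "Suc n"]) auto
  qed
next
  assume a: "\<forall>m. \<exists>n\<ge>m. P n"
  show "\<forall>m. \<exists>n\<ge>m. P (Suc n)"
  proof
    fix m obtain n where "n \<ge> Suc m" "P n" using a by blast
    then obtain k where "n = Suc k" "m \<le> k" by (cases n) auto
    then show "\<exists>n\<ge>m. P (Suc n)" using \<open>P n\<close> by blast
  qed
qed

lemma exSuc: "(\<exists>n\<le>Suc T. P n) \<longleftrightarrow> P 0 \<or> (\<exists>n\<le>T. P (Suc n))" for P :: "nat \<Rightarrow> bool"
proof
  assume "\<exists>n\<le>Suc T. P n"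
  then obtain n where "n \<le> Suc T" "P n" by blast
  then show "P 0 \<or> (\<exists>n\<le>T. P (Suc n))" by (cases n) auto
qed auto

lemma QN_shift0: "QN \<rho> x 0 h (f ## \<omega>) \<longleftrightarrow> \<rho> (last h) \<le> x \<and> QN \<rho> x 0 (h @ [nc h f]) \<omega>"
  unfolding QN_def
  using allSuc[of "\<lambda>n. \<rho> (last (hc h (f ## \<omega>) n)) \<le> x"]
    infSuc[of "\<lambda>n. last (hc h (f ## \<omega>) n) \<in> D \<rho> x"]
  by (simp only: hc_shift hc.simps(1) le0 simp_thms) blast

lemma QN_shiftSuc: "QN \<rho> x (Suc N) h (f ## \<omega>) \<longleftrightarrow> QN \<rho> x N (h @ [nc h f]) \<omega>"
  unfolding QN_def
  using allSuc2[of N "\<lambda>n. \<rho> (last (hc h (f ## \<omega>) n)) \<le> x"]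
    infSuc[of "\<lambda>n. last (hc h (f ## \<omega>) n) \<in> D \<rho> x"]
  by (simp only: hc_shift)

lemma GT_shift: "GT \<rho> x (Suc T) h (f ## \<omega>) \<longleftrightarrow> QN \<rho> x 0 h (f ## \<omega>) \<and>
   (last h \<in> D \<rho> x \<or> (\<exists>n\<le>T. last (hc (h @ [nc h f]) \<omega> n) \<in> D \<rho> x))"
  unfolding GT_def
  using exSuc[of T "\<lambda>n. last (hc h (f ## \<omega>) n) \<in> D \<rho> x"]
  by (simp only: hc_shift hc.simps(1))

definition q :: real where
  "q = Min ((\<lambda>(v,u). pmf (\<delta> v) u) ` (E \<inter> (VP \<times> UNIV)))"

lemma finE: "finite E"
  using EV finV by (meson finite_SigmaI finite_subset)

lemma q_le: "v \<in> VP \<Longrightarrow> (v,u) \<in> E \<Longrightarrow> q \<le> pmf (\<delta> v) u"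
  unfolding q_def by (rule Min_le) (use finE in auto)

lemma q_pos: "v \<in> VP \<Longrightarrow> (v,u) \<in> E \<Longrightarrow> 0 < q"
  unfolding q_def
proof (subst Min_gr_iff)
  show "finite ((\<lambda>(v,u). pmf (\<delta> v) u) ` (E \<inter> (VP \<times> UNIV)))" using finE by auto
  show "(\<lambda>(v,u). pmf (\<delta> v) u) ` (E \<inter> (VP \<times> UNIV)) \<noteq> {}" if "v \<in> VP" "(v,u) \<in> E" using that by auto
  show "\<forall>a\<in>(\<lambda>(v,u). pmf (\<delta> v) u) ` (E \<inter> (VP \<times> UNIV)). 0 < a"
  proof
    fix a assume "a \<in> (\<lambda>(v,u). pmf (\<delta> v) u) ` (E \<inter> (VP \<times> UNIV))"
    then obtain v' u' where "a = pmf (\<delta> v') u'" "v' \<in> VP" "(v',u') \<in> E" by auto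
    then show "0 < a" using supp[of v'] by (auto simp: pmf_positive)
  qed
qed

lemma bad_prob:
  assumes "last h \<in> D \<rho> x"
  shows "emeasure M {f. \<rho> (nc h f) \<le> x} \<le> ennreal (1 - q)"
proof -
  define v where "v = last h"
  obtain u where u: "(v,u) \<in> E" "\<rho> u > x" and vP: "v \<in> VP"
    using assms unfolding D_def v_def by auto
  have nv: "v \<notin> V1" "v \<notin> V2" using vP disj by auto
  have uV: "u \<in> V" using u EV by auto
  have sub: "{f. \<rho> (nc h f) \<le> x} \<subseteq> {f. f v \<noteq> u}"
    using nv uV u unfolding nc_def v_def[symmetric] by auto
  have mp: "map_pmf (\<lambda>f. f v) P = \<delta> v"
  proof -
    have "map_pmf (\<lambda>f. f v) (Pi_pmf VP s \<delta>) = (if v \<in> VP then \<delta> v else return_pmf s)"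
      by (rule Pi_pmf_component[OF finVP])
    then show ?thesis unfolding P_def using vP by simp
  qed
  have "measure M {f. f v \<noteq> u} = measure (map_pmf (\<lambda>f. f v) P) (UNIV - {u})"
    by (simp add: vimage_def)
  also have "\<dots> = 1 - pmf (\<delta> v) u"
    unfolding mp using measure_pmf.prob_compl[of "{u}" "\<delta> v"] by (simp add: measure_pmf_single)
  also have "\<dots> \<le> 1 - q" using q_le[OF vP u(1)] by simp
  finally have le: "measure M {f. f v \<noteq> u} \<le> 1 - q" .
  have "emeasure M {f. \<rho> (nc h f) \<le> x} \<le> emeasure M {f. f v \<noteq> u}"
    by (rule emeasure_mono[OF sub]) simp
  also have "\<dots> = ennreal (measure M {f. f v \<noteq> u})"
    by (simp add: measure_pmf.emeasure_eq_measure)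
  also have "\<dots> \<le> ennreal (1 - q)" using le by (rule ennreal_leI)
  finally show ?thesis .
qed

lemma QN0_null: "emeasure S {\<omega>\<in>space S. QN \<rho> x 0 h0 \<omega>} = 0"
proof (cases "D \<rho> x = {}")
  case True
  then have "{\<omega>\<in>space S. QN \<rho> x 0 h0 \<omega>} = {}" by (auto simp: QN_def)
  then show ?thesis by (metis emeasure_empty)
next
  case False
  then obtain v0 u0 where v0: "v0 \<in> VP" "(v0,u0) \<in> E" by (auto simp: D_def)
  have q0: "0 < q" using q_pos[OF v0] .
  have q1: "q \<le> 1" using q_le[OF v0] pmf_le_1[of "\<delta> v0" u0] by linarith
  interpret SP: prob_space S by (rule probS)
  define g where "g h = emeasure S {\<omega>\<in>space S. QN \<rho> x 0 h \<omega>}" for h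
  define Sg where "Sg = (SUP h. g h)"
  have gle: "g h \<le> Sg" for h unfolding Sg_def by (rule SUP_upper) simp
  have Sg1: "Sg \<le> 1" unfolding Sg_def g_def by (intro SUP_least SP.emeasure_le_1)
  have A: "g h \<le> ennreal (1-q) * Sg" if hD: "last h \<in> D \<rho> x" for h
  proof -
    have "g h = (\<integral>\<^sup>+f. emeasure S {\<omega>\<in>space S. QN \<rho> x 0 h (f ## \<omega>)} \<partial>M)"
      unfolding g_def by (rule rec_S) measurable
    also have "\<dots> \<le> (\<integral>\<^sup>+f. Sg * indicator {f. \<rho> (nc h f) \<le> x} f \<partial>M)"
    proof (rule nn_integral_mono)
      fix f
      show "emeasure S {\<omega>\<in>space S. QN \<rho> x 0 h (f ## \<omega>)} \<le> Sg * indicator {f. \<rho> (nc h f) \<le> x} f"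
      proof (cases "\<rho> (nc h f) \<le> x")
        case True
        have "emeasure S {\<omega>\<in>space S. QN \<rho> x 0 h (f ## \<omega>)} \<le> g (h @ [nc h f])"
          unfolding g_def by (rule emeasure_mono) (auto simp: QN_shift0)
        then show ?thesis using True gle[of "h @ [nc h f]"] by simp
      next
        case False
        have "\<not> QN \<rho> x 0 (h @ [nc h f]) \<omega>" for \<omega>
          using False unfolding QN_def by (auto intro!: exI[of _ 0])
        then have "{\<omega>\<in>space S. QN \<rho> x 0 h (f ## \<omega>)} = {}" by (auto simp: QN_shift0)
        then show ?thesis by (metis emeasure_empty zero_le)
      qed
    qed
    also have "\<dots> = Sg * emeasure M {f. \<rho> (nc h f) \<le> x}"
      by (rule nn_integral_cmult_indicator) simp
    also have "\<dots> \<le> Sg * ennreal (1 - q)"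
      by (intro mult_left_mono bad_prob hD) simp
    finally show ?thesis by (simp add: mult.commute)
  qed
  have Dc: "emeasure S {\<omega>\<in>space S. GT \<rho> x T h \<omega>} \<le> ennreal (1-q) * Sg" if "last h \<in> D \<rho> x" for T h
  proof -
    have "emeasure S {\<omega>\<in>space S. GT \<rho> x T h \<omega>} \<le> g h"
      unfolding g_def by (rule emeasure_mono) (auto simp: GT_def)
    then show ?thesis using A[OF that] by simp
  qed
  have B: "emeasure S {\<omega>\<in>space S. GT \<rho> x T h \<omega>} \<le> ennreal (1-q) * Sg" for T h
  proof (induction T arbitrary: h)
    case 0
    show ?case
    proof (cases "last h \<in> D \<rho> x")
      case True then show ?thesis by (rule Dc)
    next
      case False
      then have "{\<omega>\<in>space S. GT \<rho> x 0 h \<omega>} = {}" by (auto simp: GT_def)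
      then show ?thesis by (metis emeasure_empty zero_le)
    qed
  next
    case (Suc T)
    show ?case
    proof (cases "last h \<in> D \<rho> x")
      case True then show ?thesis by (rule Dc)
    next
      case False
      have "emeasure S {\<omega>\<in>space S. GT \<rho> x (Suc T) h \<omega>} =
          (\<integral>\<^sup>+f. emeasure S {\<omega>\<in>space S. GT \<rho> x (Suc T) h (f ## \<omega>)} \<partial>M)"
        by (rule rec_S) measurable
      also have "\<dots> \<le> (\<integral>\<^sup>+f. ennreal (1-q) * Sg \<partial>M)"
      proof (rule nn_integral_mono)
        fix f
        have "emeasure S {\<omega>\<in>space S. GT \<rho> x (Suc T) h (f ## \<omega>)} \<le>
              emeasure S {\<omega>\<in>space S. GT \<rho> x T (h @ [nc h f]) \<omega>}"
          using False by (intro emeasure_mono) (auto simp: GT_shift QN_shift0 GT_def[of \<rho> x T])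
        also have "\<dots> \<le> ennreal (1-q) * Sg" by (rule Suc.IH)
        finally show "emeasure S {\<omega>\<in>space S. GT \<rho> x (Suc T) h (f ## \<omega>)} \<le> ennreal (1-q) * Sg" .
      qed
      also have "\<dots> = ennreal (1-q) * Sg"
        by (simp add: measure_pmf.emeasure_space_1)
      finally show ?thesis .
    qed
  qed
  have C: "g h \<le> ennreal (1-q) * Sg" for h
  proof -
    have eq: "{\<omega>\<in>space S. QN \<rho> x 0 h \<omega>} = (\<Union>T. {\<omega>\<in>space S. GT \<rho> x T h \<omega>})"
    proof (intro equalityI subsetI)
      fix \<omega> assume a: "\<omega> \<in> {\<omega>\<in>space S. QN \<rho> x 0 h \<omega>}"
      then obtain n where "last (hc h \<omega> n) \<in> D \<rho> x" unfolding QN_def by blast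
      then show "\<omega> \<in> (\<Union>T. {\<omega>\<in>space S. GT \<rho> x T h \<omega>})" using a
        by (auto simp: GT_def intro!: exI[of _ n])
    qed (auto simp: GT_def)
    have inc: "incseq (\<lambda>T. {\<omega>\<in>space S. GT \<rho> x T h \<omega>})"
      by (auto simp: incseq_def GT_def intro: order_trans)
    have "g h = (SUP T. emeasure S {\<omega>\<in>space S. GT \<rho> x T h \<omega>})"
      unfolding g_def eq by (rule SUP_emeasure_incseq[symmetric, OF _ inc]) auto
    also have "\<dots> \<le> ennreal (1-q) * Sg" by (rule SUP_least) (rule B)
    finally show ?thesis .
  qed
  have "(SUP h. g h) \<le> ennreal (1-q) * Sg" by (rule SUP_least) (rule C)
  then have SS: "Sg \<le> ennreal (1-q) * Sg" by (simp add: Sg_def)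
  have "Sg \<noteq> \<top>" using Sg1 by (auto simp: top_unique)
  then obtain y where y: "Sg = ennreal y" "0 \<le> y" by (cases Sg) auto
  have "ennreal y \<le> ennreal ((1-q) * y)"
    using SS y q1 by (simp add: ennreal_mult)
  then have "y \<le> (1-q) * y" using q1 y(2) by (simp add: ennreal_le_iff)
  then have "q * y \<le> 0" by (simp add: algebra_simps)
  then have "y \<le> 0" using q0 by (simp add: mult_le_0_iff)
  then have "Sg = 0" using y by simp
  then show ?thesis using gle[of h0] unfolding g_def by simp
qed

lemma QN_null: "emeasure S {\<omega>\<in>space S. QN \<rho> x N h \<omega>} = 0"
proof (induction N arbitrary: h)
  case 0 then show ?case by (rule QN0_null)
next
  case (Suc N)
  have "emeasure S {\<omega>\<in>space S. QN \<rho> x (Suc N) h \<omega>} =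
      (\<integral>\<^sup>+f. emeasure S {\<omega>\<in>space S. QN \<rho> x (Suc N) h (f ## \<omega>)} \<partial>M)"
    by (rule rec_S) measurable
  also have "\<dots> = (\<integral>\<^sup>+f. 0 \<partial>M)"
    by (intro nn_integral_cong) (simp add: QN_shiftSuc Suc.IH)
  finally show ?case by simp
qed

end


lemma det:
  fixes a :: "nat \<Rightarrow> real" and F :: "real set" and Bad :: "real \<Rightarrow> nat \<Rightarrow> bool"
  assumes fin: "finite F" and aF: "\<And>n. a n \<in> F"
    and dec: "\<And>n. a (Suc n) < a n \<Longrightarrow> Bad (a n) n"
    and nc: "\<not> (\<exists>n. \<forall>m\<ge>n. a m = a n)"
  shows "\<exists>x\<in>F. \<exists>N. (\<forall>n\<ge>N. a n \<le> x) \<and> (\<forall>m. \<exists>n\<ge>m. Bad x n)"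
proof -
  define U where "U = {y\<in>F. \<exists>N. \<forall>n\<ge>N. a n \<le> y}"
  have "Max F \<in> U" unfolding U_def using fin aF by (auto intro!: Max_in Max_ge)
  then have Une: "U \<noteq> {}" and Ufin: "finite U" using fin unfolding U_def by auto
  define x where "x = Min U"
  have xU: "x \<in> U" unfolding x_def by (rule Min_in[OF Ufin Une])
  then have xF: "x \<in> F" and "\<exists>N. \<forall>n\<ge>N. a n \<le> x" unfolding U_def by auto
  then obtain N1 where N1: "\<And>n. n \<ge> N1 \<Longrightarrow> a n \<le> x" by auto
  have xmin: "\<And>y. y \<in> U \<Longrightarrow> x \<le> y" unfolding x_def using Ufin by auto
  have inf: "\<exists>n\<ge>m. a n = x" for m
  proof (rule ccontr)
    assume "\<not> (\<exists>n\<ge>m. a n = x)"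
    then have lt: "\<And>n. n \<ge> max m N1 \<Longrightarrow> a n < x" using N1 by force
    define L where "L = {y\<in>F. y < x}"
    have "a (max m N1) \<in> L" unfolding L_def using lt aF by auto
    then have Lne: "L \<noteq> {}" and Lfin: "finite L" using fin unfolding L_def by auto
    have "Max L \<in> L" by (rule Max_in[OF Lfin Lne])
    then have hML: "Max L \<in> F" "Max L < x" unfolding L_def by auto
    have "a n \<le> Max L" if "n \<ge> max m N1" for n
      using lt[OF that] aF[of n] Lfin unfolding L_def by (auto intro: Max_ge)
    then have "Max L \<in> U" unfolding U_def using hML by (auto intro!: exI[of _ "max m N1"])
    then show False using xmin hML by force
  qed
  have "\<exists>n\<ge>m. Bad x n" for m
  proof -
    obtain n where n: "n \<ge> max m N1" "a n = x" using inf by blast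
    have "\<exists>k\<ge>n. a k = x \<and> a (Suc k) \<noteq> x"
    proof (rule ccontr)
      assume "\<not> (\<exists>k\<ge>n. a k = x \<and> a (Suc k) \<noteq> x)"
      then have st: "\<And>k. k \<ge> n \<Longrightarrow> a k = x \<Longrightarrow> a (Suc k) = x" by blast
      have "a k = x" if "k \<ge> n" for k
        using that
      proof (induction k rule: dec_induct)
        case base then show ?case using n by simp
      next
        case (step k) then show ?case using st by blast
      qed
      then have "\<forall>m\<ge>n. a m = a n" using n by simp
      then show False using nc by blast
    qed
    then obtain k where k: "k \<ge> n" "a k = x" "a (Suc k) \<noteq> x" by blast
    have "a (Suc k) \<le> x" using N1 k n by simp
    then have "a (Suc k) < a k" using k by simp
    then have "Bad x k" using dec k by metis
    then show ?thesis using k n by (intro exI[of _ k]) auto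
  qed
  then show ?thesis using xF N1 by blast
qed

context gm begin

lemma good_PiE: "f \<in> set_pmf P \<Longrightarrow> f \<in> PiE_dflt VP s (set_pmf \<circ> \<delta>)"
  unfolding P_def by (rule subsetD[OF set_Pi_pmf_subset'[OF finVP, where dflt=s and p=\<delta>]])

lemma good_V: "f \<in> set_pmf P \<Longrightarrow> f v \<in> V"
  using good_PiE[of f] supp EV sV unfolding PiE_dflt_def by (cases "v \<in> VP") auto

lemma good_E: "f \<in> set_pmf P \<Longrightarrow> v \<in> VP \<Longrightarrow> (v, f v) \<in> E"
  using good_PiE[of f] supp unfolding PiE_dflt_def by auto

lemma hist_eq:
  assumes "\<forall>n. \<omega> !! n \<in> set_pmf P"
  shows "history V1 V2 \<sigma>1 \<sigma>2 s \<omega> n = hc [s] \<omega> n"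
proof (induction n)
  case 0 then show ?case by simp
next
  case (Suc n)
  have "next_vertex V1 V2 \<sigma>1 \<sigma>2 l (\<omega> !! n) = nc l (\<omega> !! n)" for l
    using good_V[of "\<omega> !! n" "last l"] assms unfolding next_vertex_def nc_def by auto
  then show ?case using Suc by (simp add: Let_def)
qed

lemma hist_snoc:
  assumes "is_history V E l" "(last l, u) \<in> E"
  shows "is_history V E (l @ [u])"
proof -
  have uV: "u \<in> V" using assms(2) EV by auto
  have l: "l \<noteq> []" "set l \<subseteq> V" "\<And>k. Suc k < length l \<Longrightarrow> (l ! k, l ! Suc k) \<in> E"
    using assms(1) unfolding is_history_def by auto
  have "((l @ [u]) ! k, (l @ [u]) ! Suc k) \<in> E" if "Suc k < length (l @ [u])" for k
  proof (cases "Suc k < length l")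
    case True then show ?thesis using l(3) by (simp add: nth_append)
  next
    case False
    then have "Suc k = length l" using that by simp
    then have "k = length l - 1" by simp
    then show ?thesis using assms(2) l(1) by (simp add: nth_append last_conv_nth)
  qed
  then show ?thesis unfolding is_history_def using l uV by auto
qed

lemma nc_edge:
  assumes st1: "strategy V E V1 \<sigma>1" and st2: "strategy V E V2 \<sigma>2"
    and h: "is_history V E l" and f: "f \<in> set_pmf P"
  shows "(last l, nc l f) \<in> E"
proof -
  have lV: "last l \<in> V" using h unfolding is_history_def by auto
  show ?thesis
  proof (cases "last l \<in> V1")
    case True then show ?thesis using st1 h unfolding strategy_def nc_def by auto
  next
    case n1: False
    show ?thesis
    proof (cases "last l \<in> V2")
      case True then show ?thesis using st2 h n1 unfolding strategy_def nc_def by auto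
    next
      case False
      then have "last l \<in> VP" using n1 lV part by auto
      then show ?thesis using n1 False good_E[OF f] good_V[OF f] unfolding nc_def by auto
    qed
  qed
qed

lemma hc_history:
  assumes st1: "strategy V E V1 \<sigma>1" and st2: "strategy V E V2 \<sigma>2"
    and g: "\<forall>n. \<omega> !! n \<in> set_pmf P"
  shows "is_history V E (hc [s] \<omega> n)"
proof (induction n)
  case 0 then show ?case using sV by (simp add: is_history_def)
next
  case (Suc n)
  then show ?case using hist_snoc nc_edge[OF st1 st2 Suc] g by (simp add: Let_def)
qed

lemma avg:
  fixes \<rho> :: "'v \<Rightarrow> real"
  assumes vP: "v \<in> VP" and eq: "\<rho> v = (\<Sum>u\<in>E``{v}. pmf (\<delta> v) u * \<rho> u)"
    and u0: "(v,u0) \<in> E" "\<rho> u0 < \<rho> v"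
  shows "\<exists>u\<in>E``{v}. \<rho> u > \<rho> v"
proof (rule ccontr)
  assume "\<not> ?thesis"
  then have le: "\<And>u. u \<in> E``{v} \<Longrightarrow> \<rho> u \<le> \<rho> v" by force
  have fin: "finite (E``{v})"
    by (rule finite_subset[OF _ finV]) (use EV in auto)
  have pos: "pmf (\<delta> v) u0 > 0" using supp[OF vP] u0 by (auto simp: pmf_positive)
  have "(\<Sum>u\<in>E``{v}. pmf (\<delta> v) u * \<rho> u) < (\<Sum>u\<in>E``{v}. pmf (\<delta> v) u * \<rho> v)"
  proof (rule sum_strict_mono_ex1[OF fin])
    show "\<forall>u\<in>E``{v}. pmf (\<delta> v) u * \<rho> u \<le> pmf (\<delta> v) u * \<rho> v"
      using le by (auto intro: mult_left_mono)
    show "\<exists>u\<in>E``{v}. pmf (\<delta> v) u * \<rho> u < pmf (\<delta> v) u * \<rho> v"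
      using u0 pos by (intro bexI[of _ u0]) auto
  qed
  also have "\<dots> = \<rho> v * (\<Sum>u\<in>E``{v}. pmf (\<delta> v) u)"
    by (simp add: sum_distrib_left mult.commute)
  also have "(\<Sum>u\<in>E``{v}. pmf (\<delta> v) u) = 1"
    using sum_pmf_eq_1[OF fin] supp[OF vP] by simp
  finally show False using eq by simp
qed

lemma classes_fin: "finite (classes V r)"
proof -
  have "classes V r = (\<lambda>v. {u \<in> V. r u = r v}) ` V" by (auto simp: classes_def)
  then show ?thesis using finV by simp
qed

lemma N0_sets: "{y \<in> space (stream_space (count_space UNIV)). \<not> (\<exists>C\<in>classes V r. \<exists>n. \<forall>m\<ge>n. y !! m \<in> C)}
   \<in> sets (stream_space (count_space UNIV))"
proof -
  have b: "Measurable.pred (stream_space (count_space UNIV)) (\<lambda>y. y !! m \<in> C)" for m C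
    by (rule measurable_compose[OF measurable_snth]) simp
  have c: "Measurable.pred (stream_space (count_space UNIV)) (\<lambda>y. \<exists>n. \<forall>m. n \<le> m \<longrightarrow> y !! m \<in> C)" for C
    by (intro pred_intros_countable pred_intros_imp' b)
  have "Measurable.pred (stream_space (count_space UNIV)) (\<lambda>y. \<not> (\<exists>C\<in>classes V r. \<exists>n. \<forall>m\<ge>n. y !! m \<in> C))"
    by (intro pred_intros_logic pred_intros_finite(4)[OF classes_fin] c)
  then show ?thesis by (simp add: pred_def)
qed

lemma main:
  assumes bell: "bellman V E V1 V2 VP \<delta> r"
    and i: "i \<in> {1, 2}"
    and st1: "strategy V E V1 \<sigma>1" and st2: "strategy V E V2 \<sigma>2"
    and keep: "\<forall>h. is_history V E h \<and> last h \<in> (if i = 1 then V1 else V2) \<longrightarrow>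
           r ((if i = 1 then \<sigma>1 else \<sigma>2) h) = r (last h)"
  shows "AE p in play_measure V1 V2 VP \<delta> \<sigma>1 \<sigma>2 s. \<exists>C\<in>classes V r. \<exists>n. \<forall>m\<ge>n. p !! m \<in> C"
proof -
  define \<rho> where "\<rho> v = (if i = 1 then r v else - r v)" for v
  have b1: "\<And>v. v \<in> V1 \<Longrightarrow> r v = Max (r ` (E``{v}))"
    and b2: "\<And>v. v \<in> V2 \<Longrightarrow> r v = Min (r ` (E``{v}))"
    and bP: "\<And>v. v \<in> VP \<Longrightarrow> r v = (\<Sum>u\<in>E``{v}. pmf (\<delta> v) u * r u)"
    using bell unfolding bellman_def by auto
  have finEv: "finite (E``{v})" for v
    by (rule finite_subset[OF _ finV]) (use EV in auto)
  have step: "last l \<in> D \<rho> (\<rho> (last l))"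
    if hl: "is_history V E l" and f: "f \<in> set_pmf P" and lt: "\<rho> (nc l f) < \<rho> (last l)" for l f
  proof -
    define v where "v = last l"
    define u where "u = nc l f"
    have e: "(v,u) \<in> E" unfolding u_def v_def by (rule nc_edge[OF st1 st2 hl f])
    have vV: "v \<in> V" using hl unfolding is_history_def v_def by auto
    have lt': "\<rho> u < \<rho> v" using lt unfolding u_def v_def .
    show ?thesis
    proof (cases "v \<in> V1")
      case True
      show ?thesis
      proof (cases "i = 1")
        case True
        then have "r u = r v" using keep hl \<open>v \<in> V1\<close> unfolding u_def v_def nc_def by auto
        then show ?thesis using lt' unfolding \<rho>_def by auto
      next
        case False
        have "r u \<le> Max (r ` (E``{v}))" using e finEv by (intro Max_ge) auto
        then have "r u \<le> r v" using b1[OF \<open>v \<in> V1\<close>] by simp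
        then show ?thesis using lt' False unfolding \<rho>_def by auto
      qed
    next
      case n1: False
      show ?thesis
      proof (cases "v \<in> V2")
        case True
        show ?thesis
        proof (cases "i = 1")
          case False
          then have "r u = r v" using keep hl \<open>v \<in> V2\<close> n1 i unfolding u_def v_def nc_def by auto
          then show ?thesis using lt' unfolding \<rho>_def by auto
        next
          case i1: True
          have "Min (r ` (E``{v})) \<le> r u" using e finEv by (intro Min_le) auto
          then have "r v \<le> r u" using b2[OF \<open>v \<in> V2\<close>] by simp
          then show ?thesis using lt' i1 unfolding \<rho>_def by auto
        qed
      next
        case False
        then have vP: "v \<in> VP" using n1 vV part by auto
        have eq: "\<rho> v = (\<Sum>u\<in>E``{v}. pmf (\<delta> v) u * \<rho> u)"
          using bP[OF vP] by (auto simp: \<rho>_def sum_negf)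
        obtain u' where "u' \<in> E``{v}" "\<rho> u' > \<rho> v" using avg[OF vP eq e lt'] by blast
        then show ?thesis using vP unfolding D_def v_def by auto
      qed
    qed
  qed
  have AEg: "AE \<omega> in S. \<forall>n. \<omega> !! n \<in> set_pmf P"
  proof -
    have "Measurable.pred M (\<lambda>f. f \<in> set_pmf P)" by (simp add: pred_def)
    from prob_space.AE_stream_all[OF prob_space_measure_pmf this AE_measure_pmf[of P]]
    show ?thesis unfolding stream_all_def .
  qed
  have AEQ: "AE \<omega> in S. \<forall>x\<in>\<rho>`V. \<forall>N. \<not> QN \<rho> x N [s] \<omega>"
  proof (rule AE_finite_allI)
    show "finite (\<rho>`V)" using finV by simp
    fix x
    show "AE \<omega> in S. \<forall>N. \<not> QN \<rho> x N [s] \<omega>"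
    proof (subst AE_all_countable, intro allI)
      fix N
      have "{\<omega>\<in>space S. QN \<rho> x N [s] \<omega>} \<in> sets S" using meas_QN by (simp add: pred_def)
      then show "AE \<omega> in S. \<not> QN \<rho> x N [s] \<omega>"
        by (subst AE_iff_measurable[of "{\<omega>\<in>space S. QN \<rho> x N [s] \<omega>}"]) (auto simp: QN_null)
    qed
  qed
  have det_part: "\<exists>C\<in>classes V r. \<exists>n. \<forall>m\<ge>n. play V1 V2 \<sigma>1 \<sigma>2 s \<omega> !! m \<in> C"
    if g: "\<forall>n. \<omega> !! n \<in> set_pmf P" and nq: "\<forall>x\<in>\<rho>`V. \<forall>N. \<not> QN \<rho> x N [s] \<omega>" for \<omega>
  proof -
    define pv where "pv n = last (hc [s] \<omega> n)" for n
    have pl: "play V1 V2 \<sigma>1 \<sigma>2 s \<omega> !! m = pv m" for m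
      unfolding play_def pv_def using hist_eq[OF g] by simp
    have hist: "is_history V E (hc [s] \<omega> n)" for n using hc_history[OF st1 st2 g] .
    have pvV: "pv n \<in> V" for n using hist[of n] unfolding is_history_def pv_def by auto
    have pvS: "pv (Suc n) = nc (hc [s] \<omega> n) (\<omega> !! n)" for n by (simp add: pv_def Let_def)
    show ?thesis
    proof (cases "\<exists>n. \<forall>m\<ge>n. \<rho> (pv m) = \<rho> (pv n)")
      case True
      then obtain n where n: "\<forall>m\<ge>n. \<rho> (pv m) = \<rho> (pv n)" by blast
      have rn: "\<forall>m\<ge>n. r (pv m) = r (pv n)"
      proof (intro allI impI)
        fix m assume "m \<ge> n"
        then have "\<rho> (pv m) = \<rho> (pv n)" using n by blast
        then show "r (pv m) = r (pv n)" by (cases "i = 1") (simp_all add: \<rho>_def)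
      qed
      have C: "{u\<in>V. r u = r (pv n)} \<in> classes V r" unfolding classes_def by (rule CollectI, rule exI[of _ "pv n"]) (simp add: pvV)
      show ?thesis
      proof (rule bexI[OF _ C], rule exI[of _ n], intro allI impI)
        fix m assume "n \<le> m"
        then have "r (pv m) = r (pv n)" using rn by blast
        then show "play V1 V2 \<sigma>1 \<sigma>2 s \<omega> !! m \<in> {u\<in>V. r u = r (pv n)}"
          using pvV[of m] unfolding pl by simp
      qed
    next
      case False
      have "\<exists>x\<in>\<rho>`V. \<exists>N. (\<forall>n\<ge>N. \<rho> (pv n) \<le> x) \<and> (\<forall>m. \<exists>n\<ge>m. pv n \<in> D \<rho> x)"
      proof (rule det[of "\<rho> ` V" "\<lambda>n. \<rho> (pv n)" "\<lambda>x n. pv n \<in> D \<rho> x"])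
        show "finite (\<rho> ` V)" using finV by simp
        show "\<rho> (pv n) \<in> \<rho> ` V" for n using pvV by simp
        show "pv n \<in> D \<rho> (\<rho> (pv n))" if "\<rho> (pv (Suc n)) < \<rho> (pv n)" for n
          using step[OF hist[of n] g[rule_format, of n]] that unfolding pvS pv_def by (simp add: Let_def)
      qed (use False in blast)
      then obtain x N where x: "x \<in> \<rho>`V" "\<forall>n\<ge>N. \<rho> (pv n) \<le> x" "\<forall>m. \<exists>n\<ge>m. pv n \<in> D \<rho> x"
        by blast
      have "QN \<rho> x N [s] \<omega>" using x(2,3) unfolding QN_def pv_def by simp
      then show ?thesis using nq x(1) by blast
    qed
  qed
  have AEall: "AE \<omega> in S. \<exists>C\<in>classes V r. \<exists>n. \<forall>m\<ge>n. play V1 V2 \<sigma>1 \<sigma>2 s \<omega> !! m \<in> C"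
  proof -
    have "AE \<omega> in S. (\<forall>n. \<omega> !! n \<in> set_pmf P) \<and> (\<forall>x\<in>\<rho>`V. \<forall>N. \<not> QN \<rho> x N [s] \<omega>)"
      using AEg AEQ by (rule eventually_conj)
    then show ?thesis by (rule eventually_mono) (use det_part in blast)
  qed
  show ?thesis unfolding play_measure_def P_def[symmetric]
    by (rule AE_distr_nonmeas[OF AEall N0_sets])
qed

end

theorem proposition4:
  fixes V V1 V2 VP :: "'v set" and E :: "('v \<times> 'v) set" and \<delta> :: "'v \<Rightarrow> 'v pmf"
    and r :: "'v \<Rightarrow> real" and i :: nat and \<sigma>1 \<sigma>2 :: "'v list \<Rightarrow> 'v" and s :: 'v
  assumes "stochastic_game V E V1 V2 VP \<delta>"
    and "bellman V E V1 V2 VP \<delta> r"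
    and "i \<in> {1, 2}"
    and "strategy V E V1 \<sigma>1" and "strategy V E V2 \<sigma>2"
    and "\<forall>h. is_history V E h \<and> last h \<in> (if i = 1 then V1 else V2) \<longrightarrow>
           r ((if i = 1 then \<sigma>1 else \<sigma>2) h) = r (last h)"
    and "s \<in> V"
  shows "AE p in play_measure V1 V2 VP \<delta> \<sigma>1 \<sigma>2 s. \<exists>C\<in>classes V r. \<exists>n. \<forall>m\<ge>n. p !! m \<in> C"
proof -
  interpret gm V E V1 V2 VP \<delta> \<sigma>1 \<sigma>2 s
    using assms(1) assms(7) by unfold_locales
  show ?thesis by (rule main[OF assms(2) assms(3) assms(4) assms(5) assms(6)])
qed

end
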